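(* Let $K$ be a real biquadratic field with $\operatorname{sgnrk}(K)\ge 3$, and let $K_i=\mathbb{Q}(\sqrt{D_i})$, $1\le i\le 3$, be its three quadratic subfields, with $D_i>1$ squarefree. Then for each $1\le i\le 3$ there exists a unit $\eta_i\in\mathcal{O}_K^\times$ with $\operatorname{sgn}(\eta_i)=\operatorname{sgn}(\sqrt{D_i})$.
   Context: A real biquadratic field is $K=\mathbb{Q}(\sqrt{D_1},\sqrt{D_2})$ of degree $4$ with $D_1,D_2>1$ squarefree integers. For $\alpha\in K^\times$, $\operatorname{sgn}(\alpha)\in\mathbb{F}_2^4$ records the signs of its four real embeddings ($0$ for positive, $1$ for negative). $\operatorname{sgnrk}(K)$ is the $\mathbb{F}_2$-dimension of the unit signature group $\{\operatorname{sgn}(\eta):\eta\in\mathcal{O}_K^\times\}$. *)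

theory Defs
  imports "HOL-Analysis.Analysis" "HOL-Library.Z2" "HOL-Computational_Algebra.Squarefree"
begin

text \<open>The real biquadratic field K = Q(sqrt D1, sqrt D2) is represented concretely:
  an element is a quadruple (a,b,c,d) of rationals standing for
  a + b sqrt D1 + c sqrt D2 + d sqrt (D1 D2).  The four real embeddings are indexed
  by sigma = (e1,e2) :: bool * bool, sending sqrt D1 to -sqrt D1 iff e1 and
  sqrt D2 to -sqrt D2 iff e2.\<close>

definition real_biquadratic :: "int \<Rightarrow> int \<Rightarrow> bool" where
  "real_biquadratic D1 D2 \<longleftrightarrow> D1 > 1 \<and> D2 > 1 \<and> squarefree D1 \<and> squarefree D2 \<and> D1 \<noteq> D2"

definition bq_emb :: "int \<Rightarrow> int \<Rightarrow> bool \<times> bool \<Rightarrow> rat \<times> rat \<times> rat \<times> rat \<Rightarrow> real" where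
  "bq_emb D1 D2 \<sigma> x = (case x of (a, b, c, d) \<Rightarrow>
     let s1 = (if fst \<sigma> then -1 else 1 :: real); s2 = (if snd \<sigma> then -1 else 1 :: real) in
     of_rat a + of_rat b * s1 * sqrt (of_int D1) + of_rat c * s2 * sqrt (of_int D2)
       + of_rat d * (s1 * s2) * sqrt (of_int (D1 * D2)))"

abbreviation bq_val :: "int \<Rightarrow> int \<Rightarrow> rat \<times> rat \<times> rat \<times> rat \<Rightarrow> real" where
  "bq_val D1 D2 \<equiv> bq_emb D1 D2 (False, False)"

definition bq_unit :: "int \<Rightarrow> int \<Rightarrow> rat \<times> rat \<times> rat \<times> rat \<Rightarrow> bool" where
  "bq_unit D1 D2 x \<longleftrightarrow> algebraic_int (bq_val D1 D2 x) \<and>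
     (\<exists>y. algebraic_int (bq_val D1 D2 y) \<and> bq_val D1 D2 x * bq_val D1 D2 y = 1)"

definition bq_sgn :: "int \<Rightarrow> int \<Rightarrow> rat \<times> rat \<times> rat \<times> rat \<Rightarrow> bit ^ (bool \<times> bool)" where
  "bq_sgn D1 D2 x = (\<chi> \<sigma>. if bq_emb D1 D2 \<sigma> x < 0 then 1 else 0)"

definition sgnrk :: "int \<Rightarrow> int \<Rightarrow> nat" where
  "sgnrk D1 D2 = vec.dim (bq_sgn D1 D2 ` {x. bq_unit D1 D2 x})"

end

theory Submission
  imports Defs "Jordan_Normal_Form.Char_Poly"
begin

no_notation Finite_Cartesian_Product.vec_nth (infixl "$" 90)

definition ai_crit :: "real \<Rightarrow> bool" where
  "ai_crit x \<longleftrightarrow> (\<exists>n (A :: int mat) (v :: real Matrix.vec). A \<in> carrier_mat n n \<and> v \<in> carrier_vec n \<and>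
      v \<noteq> 0\<^sub>v n \<and> map_mat real_of_int A *\<^sub>v v = x \<cdot>\<^sub>v v)"

lemma ai_crit_imp: assumes "ai_crit x" shows "algebraic_int x"
proof -
  obtain n A v where A: "A \<in> carrier_mat n n" and v: "v \<in> carrier_vec n" "v \<noteq> 0\<^sub>v n"
    and e: "map_mat real_of_int A *\<^sub>v v = x \<cdot>\<^sub>v v"
    using assms unfolding ai_crit_def by blast
  have A': "map_mat real_of_int A \<in> carrier_mat n n" using A by simp
  have "eigenvalue (map_mat real_of_int A) x"
    unfolding eigenvalue_def eigenvector_def using A v e by auto
  hence "poly (char_poly (map_mat real_of_int A)) x = 0"
    using eigenvalue_root_char_poly[OF A'] by simp
  moreover have "char_poly (map_mat real_of_int A) = map_poly real_of_int (char_poly A)"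
    by (rule of_int_hom.char_poly_hom[OF A])
  ultimately have "poly (map_poly real_of_int (char_poly A)) x = 0" by simp
  moreover have "lead_coeff (char_poly A) = 1"
    using degree_monic_char_poly[OF A] by simp
  ultimately show ?thesis
    unfolding algebraic_int_altdef_ipoly by blast
qed

lemma imp_ai_crit: assumes "algebraic_int (x::real)" shows "ai_crit x"
proof -
  obtain p where p0: "poly (map_poly real_of_int p) x = 0" and lc: "lead_coeff p = 1"
    using assms unfolding algebraic_int_altdef_ipoly by blast
  define n where "n = degree p"
  have psum: "0 = (\<Sum>j\<le>n. real_of_int (coeff p j) * x ^ j)"
    using p0 by (simp add: poly_altdef n_def degree_map_poly coeff_map_poly)
  have "n > 0"
  proof (rule ccontr)
    assume "\<not> n > 0"
    hence n0: "n = 0" by simp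
    have "coeff p 0 = 1" using lc n0 by (simp add: n_def)
    thus False using psum n0 by simp
  qed
  define A :: "int mat" where "A = mat n n (\<lambda>(i,j). if i + 1 < n then (if j = i + 1 then 1 else 0) else - coeff p j)"
  define v :: "real Matrix.vec" where "v = Matrix.vec n (\<lambda>i. x ^ i)"
  have A: "A \<in> carrier_mat n n" by (simp add: A_def)
  have v: "v \<in> carrier_vec n" by (simp add: v_def)
  have v0: "v \<noteq> 0\<^sub>v n"
  proof
    assume "v = 0\<^sub>v n"
    hence "v $ 0 = 0\<^sub>v n $ 0" by simp
    thus False using \<open>n > 0\<close> by (simp add: v_def)
  qed
  have polyx: "x ^ n = - (\<Sum>j<n. real_of_int (coeff p j) * x ^ j)"
  proof -
    have ins: "{..n} = insert n {..<n}" by auto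
    have "0 = (\<Sum>j\<in>insert n {..<n}. real_of_int (coeff p j) * x ^ j)" using psum unfolding ins .
    also have "\<dots> = real_of_int (coeff p n) * x ^ n + (\<Sum>j<n. real_of_int (coeff p j) * x ^ j)"
      by (rule sum.insert) auto
    finally have h: "0 = real_of_int (coeff p n) * x ^ n + (\<Sum>j<n. real_of_int (coeff p j) * x ^ j)" .
    have "coeff p n = 1" using lc by (simp add: n_def)
    with h show ?thesis by simp
  qed
  have "map_mat real_of_int A *\<^sub>v v = x \<cdot>\<^sub>v v"
  proof (rule eq_vecI)
    fix i assume "i < dim_vec (x \<cdot>\<^sub>v v)"
    hence i: "i < n" by (simp add: v_def)
    have lhs: "(map_mat real_of_int A *\<^sub>v v) $ i = (\<Sum>j<n. real_of_int (A $$ (i,j)) * x ^ j)"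
      using i A by (simp add: scalar_prod_def atLeast0LessThan v_def row_def)
    show "(map_mat real_of_int A *\<^sub>v v) $ i = (x \<cdot>\<^sub>v v) $ i"
    proof (cases "i + 1 < n")
      case True
      have "(\<Sum>j<n. real_of_int (A $$ (i,j)) * x ^ j) = (\<Sum>j<n. if j = i + 1 then x ^ j else 0)"
        by (rule sum.cong) (use True i in \<open>auto simp: A_def\<close>)
      also have "\<dots> = x ^ (i+1)" using True by simp
      finally show ?thesis using lhs i by (simp add: v_def)
    next
      case False
      hence ii: "i = n - 1" using i by simp
      have "(\<Sum>j<n. real_of_int (A $$ (i,j)) * x ^ j) = (\<Sum>j<n. - (real_of_int (coeff p j) * x ^ j))"
        by (rule sum.cong) (use False i in \<open>auto simp: A_def\<close>)
      also have "\<dots> = x ^ n" using polyx by (simp add: sum_negf)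
      also have "\<dots> = x * x ^ i"
      proof -
        have "n = Suc i" using ii \<open>n > 0\<close> by simp
        thus ?thesis by simp
      qed
      finally show ?thesis using lhs i by (simp add: v_def)
    qed
  qed (simp add: v_def A_def)
  note eqA = this
  show ?thesis unfolding ai_crit_def
    by (rule exI[of _ n], rule exI[of _ A], rule exI[of _ v]) (use A v v0 eqA in simp)
qed

lemma sum_div_mod: "(\<Sum>l<n*m. f (l div m) (l mod m)) = (\<Sum>i<n. \<Sum>j<m. f i j)" for f :: "nat \<Rightarrow> nat \<Rightarrow> 'a::comm_monoid_add"
proof (induction n)
  case 0 then show ?case by simp
next
  case (Suc n)
  have eq: "{..<Suc n * m} = {..<n*m} \<union> {n*m..<n*m+m}" by auto
  have shift: "(\<Sum>l\<in>{n*m..<n*m+m}. f (l div m) (l mod m)) = (\<Sum>j<m. f n j)"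
  proof -
    have "(\<Sum>l\<in>{n*m..<n*m+m}. f (l div m) (l mod m)) = (\<Sum>j\<in>{0..<m}. f ((j + n*m) div m) ((j+n*m) mod m))"
      by (subst sum.shift_bounds_nat_ivl[symmetric]) (simp add: add.commute)
    also have "\<dots> = (\<Sum>j<m. f n j)"
      by (rule sum.cong) auto
    finally show ?thesis .
  qed
  have "(\<Sum>l<Suc n*m. f (l div m) (l mod m)) = (\<Sum>l<n*m. f (l div m) (l mod m)) + (\<Sum>l\<in>{n*m..<n*m+m}. f (l div m) (l mod m))"
    unfolding eq by (rule sum.union_disjoint) auto
  also have "\<dots> = (\<Sum>i<n. \<Sum>j<m. f i j) + (\<Sum>j<m. f n j)"
    by (simp only: Suc.IH shift)
  also have "\<dots> = (\<Sum>i<Suc n. \<Sum>j<m. f i j)"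
    by (rule sum.lessThan_Suc[symmetric])
  finally show ?case .
qed

lemma divmod_pair: "j < (m::nat) \<Longrightarrow> (i * m + j) div m = i \<and> (i * m + j) mod m = j"
proof -
  assume j: "j < m"
  hence "(j + i * m) div m = j div m + i" by simp
  moreover have "j div m = 0" "j mod m = j" using j by simp_all
  moreover have "(j + i * m) mod m = j mod m" by simp
  ultimately show ?thesis by (simp add: add.commute)
qed

lemma ai_crit_mult: assumes "ai_crit x" "ai_crit y" shows "ai_crit (x * y)"
proof -
  obtain n A v where A: "A \<in> carrier_mat n n" and v: "v \<in> carrier_vec n" "v \<noteq> 0\<^sub>v n"
    and ev: "map_mat real_of_int A *\<^sub>v v = x \<cdot>\<^sub>v v"
    using assms(1) unfolding ai_crit_def by blast
  obtain m B u where B: "B \<in> carrier_mat m m" and u: "u \<in> carrier_vec m" "u \<noteq> 0\<^sub>v m"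
    and eu: "map_mat real_of_int B *\<^sub>v u = y \<cdot>\<^sub>v u"
    using assms(2) unfolding ai_crit_def by blast
  have "\<exists>i<n. v $ i \<noteq> 0"
  proof (rule ccontr)
    assume "\<not> ?thesis"
    hence "v = 0\<^sub>v n" using v(1) by (intro eq_vecI) auto
    thus False using v(2) by simp
  qed
  then obtain i0 where i0: "i0 < n" "v $ i0 \<noteq> 0" by blast
  have "\<exists>j<m. u $ j \<noteq> 0"
  proof (rule ccontr)
    assume "\<not> ?thesis"
    hence "u = 0\<^sub>v m" using u(1) by (intro eq_vecI) auto
    thus False using u(2) by simp
  qed
  then obtain j0 where j0: "j0 < m" "u $ j0 \<noteq> 0" by blast
  have evi: "(\<Sum>k<n. real_of_int (A $$ (i,k)) * v $ k) = x * v $ i" if "i < n" for i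
  proof -
    have "(map_mat real_of_int A *\<^sub>v v) $ i = (x \<cdot>\<^sub>v v) $ i" using ev by simp
    thus ?thesis using that A v by (simp add: scalar_prod_def atLeast0LessThan row_def)
  qed
  have eui: "(\<Sum>k<m. real_of_int (B $$ (j,k)) * u $ k) = y * u $ j" if "j < m" for j
  proof -
    have "(map_mat real_of_int B *\<^sub>v u) $ j = (y \<cdot>\<^sub>v u) $ j" using eu by simp
    thus ?thesis using that B u by (simp add: scalar_prod_def atLeast0LessThan row_def)
  qed
  define C :: "int mat" where "C = mat (n*m) (n*m) (\<lambda>(k,l). A $$ (k div m, l div m) * B $$ (k mod m, l mod m))"
  define w :: "real Matrix.vec" where "w = Matrix.vec (n*m) (\<lambda>k. v $ (k div m) * u $ (k mod m))"
  have C: "C \<in> carrier_mat (n*m) (n*m)" by (simp add: C_def)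
  have w: "w \<in> carrier_vec (n*m)" by (simp add: w_def)
  have k0: "i0 * m + j0 < n * m"
  proof -
    have "i0 * m + j0 < i0 * m + m" using j0 by simp
    also have "\<dots> = Suc i0 * m" by simp
    also have "\<dots> \<le> n * m" using i0 by (intro mult_right_mono) auto
    finally show ?thesis .
  qed
  have w0: "w \<noteq> 0\<^sub>v (n*m)"
  proof
    assume "w = 0\<^sub>v (n*m)"
    hence "w $ (i0 * m + j0) = 0" using k0 by simp
    moreover have "(i0 * m + j0) div m = i0" "(i0 * m + j0) mod m = j0" using j0 by (simp_all add: divmod_pair)
    ultimately show False using k0 i0 j0 by (simp add: w_def)
  qed
  have "map_mat real_of_int C *\<^sub>v w = (x * y) \<cdot>\<^sub>v w"
  proof (rule eq_vecI)
    fix k assume "k < dim_vec ((x * y) \<cdot>\<^sub>v w)"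
    hence k: "k < n * m" by (simp add: w_def)
    have m0: "m > 0" using k by (cases m) auto
    have kd: "k div m < n" using k by (simp add: less_mult_imp_div_less)
    have km: "k mod m < m" using m0 by simp
    have "(map_mat real_of_int C *\<^sub>v w) $ k = (\<Sum>l<n*m. real_of_int (C $$ (k,l)) * w $ l)"
      using k C by (simp add: scalar_prod_def atLeast0LessThan row_def w_def)
    also have "\<dots> = (\<Sum>l<n*m. (real_of_int (A $$ (k div m, l div m)) * v $ (l div m)) *
                       (real_of_int (B $$ (k mod m, l mod m)) * u $ (l mod m)))"
      by (rule sum.cong) (use k in \<open>simp_all add: C_def w_def mult_ac\<close>)
    also have "\<dots> = (\<Sum>i<n. \<Sum>j<m. (real_of_int (A $$ (k div m, i)) * v $ i) *
                       (real_of_int (B $$ (k mod m, j)) * u $ j))"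
      by (rule sum_div_mod[where f = "\<lambda>i j. (real_of_int (A $$ (k div m, i)) * v $ i) * (real_of_int (B $$ (k mod m, j)) * u $ j)"])
    also have "\<dots> = (\<Sum>i<n. real_of_int (A $$ (k div m, i)) * v $ i) * (\<Sum>j<m. real_of_int (B $$ (k mod m, j)) * u $ j)"
      by (simp add: sum_product)
    also have "\<dots> = (x * v $ (k div m)) * (y * u $ (k mod m))"
      using evi[OF kd] eui[OF km] by simp
    also have "\<dots> = ((x * y) \<cdot>\<^sub>v w) $ k" using k by (simp add: w_def mult_ac)
    finally show "(map_mat real_of_int C *\<^sub>v w) $ k = ((x * y) \<cdot>\<^sub>v w) $ k" .
  qed (simp add: w_def C_def)
  note eqC = this
  show ?thesis unfolding ai_crit_def
    by (rule exI[of _ "n*m"], rule exI[of _ C], rule exI[of _ w]) (use C w w0 eqC in simp)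
qed

lemma algebraic_int_mult_real:
  assumes "algebraic_int (x::real)" "algebraic_int y" shows "algebraic_int (x * y)"
  by (rule ai_crit_imp[OF ai_crit_mult[OF imp_ai_crit[OF assms(1)] imp_ai_crit[OF assms(2)]]])

no_notation Matrix.vec_index (infixl "$" 100)
notation Finite_Cartesian_Product.vec_nth (infixl "$" 90)



type_synonym q4 = "rat \<times> rat \<times> rat \<times> rat"

definition E :: "real \<Rightarrow> real \<Rightarrow> q4 \<Rightarrow> real" where
  "E t1 t2 x = (case x of (a,b,c,d) \<Rightarrow> of_rat a + of_rat b * t1 + of_rat c * t2 + of_rat d * (t1 * t2))"

definition sg :: "bool \<Rightarrow> real" where "sg e = (if e then -1 else 1)"

lemma sg_sq [simp]: "sg e * sg e = 1" by (simp add: sg_def)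

lemma emb_E:
  assumes "D1 \<ge> 0" "D2 \<ge> 0"
  shows "bq_emb D1 D2 \<sigma> x = E (sg (fst \<sigma>) * sqrt (of_int D1)) (sg (snd \<sigma>) * sqrt (of_int D2)) x"
  using assms by (cases x; cases \<sigma>) (auto simp: bq_emb_def E_def sg_def Let_def real_sqrt_mult mult_ac)

definition qmul :: "int \<Rightarrow> int \<Rightarrow> q4 \<Rightarrow> q4 \<Rightarrow> q4" where
 "qmul D1 D2 x y = (case x of (a,b,c,d) \<Rightarrow> case y of (a',b',c',d') \<Rightarrow>
   (a*a' + of_int D1*b*b' + of_int D2*c*c' + of_int D1 * of_int D2*d*d',
    a*b' + b*a' + of_int D2*(c*d' + d*c'),
    a*c' + c*a' + of_int D1*(b*d' + d*b'),
    a*d' + d*a' + b*c' + c*b'))"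

definition qadd :: "q4 \<Rightarrow> q4 \<Rightarrow> q4" where
 "qadd x y = (case x of (a,b,c,d) \<Rightarrow> case y of (a',b',c',d') \<Rightarrow> (a+a', b+b', c+c', d+d'))"

definition qsub :: "q4 \<Rightarrow> q4 \<Rightarrow> q4" where
 "qsub x y = (case x of (a,b,c,d) \<Rightarrow> case y of (a',b',c',d') \<Rightarrow> (a-a', b-b', c-c', d-d'))"

definition qconst :: "rat \<Rightarrow> q4" where "qconst c = (c, 0, 0, 0)"

lemma E_mul:
  assumes "t1 * t1 = of_int D1" "t2 * t2 = of_int D2"
  shows "E t1 t2 (qmul D1 D2 x y) = E t1 t2 x * E t1 t2 y"
proof -
  obtain a b c d where x: "x = (a,b,c,d)" by (cases x) auto
  obtain a' b' c' d' where y: "y = (a',b',c',d')" by (cases y) auto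
  show ?thesis unfolding x y E_def qmul_def
    by (simp add: of_rat_add of_rat_mult flip: assms) (simp add: algebra_simps)
qed

lemma E_add: "E t1 t2 (qadd x y) = E t1 t2 x + E t1 t2 y"
  by (cases x; cases y) (simp add: E_def qadd_def of_rat_add algebra_simps)

lemma E_sub: "E t1 t2 (qsub x y) = E t1 t2 x - E t1 t2 y"
  by (cases x; cases y) (simp add: E_def qsub_def of_rat_diff algebra_simps)

lemma E_const [simp]: "E t1 t2 (qconst c) = of_rat c"
  by (simp add: E_def qconst_def)

lemma sqrt_rat_square:
  assumes "n \<ge> 0" "sqrt (real_of_int n) \<in> \<rat>"
  shows "\<exists>k. n = k ^ 2"
proof -
  have "algebraic_int (sqrt (real_of_int n))" by (intro algebraic_int_sqrt) simp
  hence "sqrt (real_of_int n) \<in> \<int>" using assms(2) rational_algebraic_int_is_int by blast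
  then obtain k where k: "sqrt (real_of_int n) = of_int k" by (auto elim: Ints_cases)
  have "real_of_int n = (sqrt (real_of_int n)) ^ 2" using assms(1) by simp
  also have "\<dots> = real_of_int (k ^ 2)" using k by simp
  finally show ?thesis by (intro exI[of _ k]) linarith
qed

lemma sqf_not_square:
  assumes "squarefree (n::int)" "n > 1"
  shows "sqrt (real_of_int n) \<notin> \<rat>"
proof
  assume "sqrt (real_of_int n) \<in> \<rat>"
  then obtain k where k: "n = k ^ 2" using sqrt_rat_square assms by fastforce
  hence "squarefree (k ^ 2)" using assms by simp
  hence "is_unit k" by (simp add: squarefree_power_iff)
  hence "\<bar>k\<bar> = 1" by (simp add: zdvd1_eq)
  hence "k ^ 2 = 1" by (metis power2_abs one_power2)
  thus False using k assms by simp
qed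

lemma prod_square_eq:
  assumes "squarefree (D1::int)" "squarefree D2" "D1 > 0" "D2 > 0" "D1 * D2 = k ^ 2"
  shows "D1 = D2"
proof -
  have k0: "k \<noteq> 0" using assms by auto
  have "multiplicity p D1 = multiplicity p D2" if p: "prime p" for p
  proof -
    have pe: "prime_elem p" using p by (rule prime_imp_prime_elem)
    have "multiplicity p D1 + multiplicity p D2 = multiplicity p (D1 * D2)"
      using assms(3,4) prime_elem_multiplicity_mult_distrib[OF pe, of D1 D2] by simp
    also have "\<dots> = 2 * multiplicity p k" using assms(5) pe k0 by (simp add: prime_elem_multiplicity_power_distrib)
    finally have e: "multiplicity p D1 + multiplicity p D2 = 2 * multiplicity p k" .
    have "multiplicity p D1 \<le> 1" using assms(1,3) p squarefree_factorial_semiring''[of D1] by auto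
    moreover have "multiplicity p D2 \<le> 1" using assms(2,4) p squarefree_factorial_semiring''[of D2] by auto
    ultimately show ?thesis using e by presburger
  qed
  hence "normalize D1 = normalize D2" using assms by (intro multiplicity_eq_imp_eq) auto
  thus ?thesis using assms by simp
qed

section \<open>Linear independence\<close>

lemma lin_rat:
  fixes p q r :: real
  assumes "p \<in> \<rat>" "q \<in> \<rat>" "r \<notin> \<rat>" "p + q * r = 0"
  shows "p = 0"
proof (cases "q = 0")
  case True thus ?thesis using assms by simp
next
  case False
  hence "r = - p / q" using assms(4) by (simp add: field_simps)
  hence "r \<in> \<rat>" using assms(1,2) by simp
  thus ?thesis using assms(3) by simp
qed

lemma indep_real:
  fixes A B C Dd r1 r2 d1 d2 :: real
  assumes r1: "r1 * r1 = d1" and r2: "r2 * r2 = d2"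
    and rat: "A \<in> \<rat>" "B \<in> \<rat>" "C \<in> \<rat>" "Dd \<in> \<rat>" "d1 \<in> \<rat>" "d2 \<in> \<rat>"
    and irr: "r1 \<notin> \<rat>" "r2 \<notin> \<rat>" "r1 * r2 \<notin> \<rat>"
    and pos: "d1 > 0" "d2 > 0"
    and eq: "A + B * r1 + C * r2 + Dd * (r1 * r2) = 0"
  shows "A = 0 \<and> B = 0 \<and> C = 0 \<and> Dd = 0"
proof -
  have e1: "(A*A + d1*B*B - d2*C*C - d1*d2*Dd*Dd) + (2*A*B - 2*d2*C*Dd) * r1 = 0"
  proof -
    have "(A*A + d1*B*B - d2*C*C - d1*d2*Dd*Dd) + (2*A*B - 2*d2*C*Dd) * r1 =
          (A + B*r1 + C*r2 + Dd*(r1*r2)) * (A + B*r1 - C*r2 - Dd*(r1*r2))"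
      unfolding r1[symmetric] r2[symmetric] by (simp add: algebra_simps)
    thus ?thesis using eq by simp
  qed
  have e2: "(A*A + d2*C*C - d1*B*B - d1*d2*Dd*Dd) + (2*A*C - 2*d1*B*Dd) * r2 = 0"
  proof -
    have "(A*A + d2*C*C - d1*B*B - d1*d2*Dd*Dd) + (2*A*C - 2*d1*B*Dd) * r2 =
          (A + B*r1 + C*r2 + Dd*(r1*r2)) * (A - B*r1 + C*r2 - Dd*(r1*r2))"
      unfolding r1[symmetric] r2[symmetric] by (simp add: algebra_simps)
    thus ?thesis using eq by simp
  qed
  have e3: "(A*A + d1*d2*Dd*Dd - d1*B*B - d2*C*C) + (2*A*Dd - 2*B*C) * (r1*r2) = 0"
  proof -
    have "(A*A + d1*d2*Dd*Dd - d1*B*B - d2*C*C) + (2*A*Dd - 2*B*C) * (r1*r2) =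
          (A + B*r1 + C*r2 + Dd*(r1*r2)) * (A - B*r1 - C*r2 + Dd*(r1*r2))"
      unfolding r1[symmetric] r2[symmetric] by (simp add: algebra_simps)
    thus ?thesis using eq by simp
  qed
  have f1: "A*A + d1*B*B - d2*C*C - d1*d2*Dd*Dd = 0"
    by (rule lin_rat[OF _ _ irr(1) e1]) (use rat in auto)
  have f2: "A*A + d2*C*C - d1*B*B - d1*d2*Dd*Dd = 0"
    by (rule lin_rat[OF _ _ irr(2) e2]) (use rat in auto)
  have f3: "A*A + d1*d2*Dd*Dd - d1*B*B - d2*C*C = 0"
    by (rule lin_rat[OF _ _ irr(3) e3]) (use rat in auto)
  have g1: "A*A = d1*(B*B)" using f1 f2 f3 by (simp add: algebra_simps, linarith?)
  have g2: "A*A = d2*(C*C)" using f1 f2 f3 by (simp add: algebra_simps, linarith?)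
  have g3: "A*A = d1*d2*(Dd*Dd)" using f1 f2 f3 by (simp add: algebra_simps, linarith?)
  have B0: "B = 0"
  proof (rule ccontr)
    assume "B \<noteq> 0"
    have "(r1 - A/B) * (r1 + A/B) = 0" using g1 r1 \<open>B \<noteq> 0\<close> by (simp add: field_simps) algebra
    hence "r1 - A/B = 0 \<or> r1 + A/B = 0" by simp
    hence "r1 = A/B \<or> r1 = - (A/B)" by (auto simp: eq_neg_iff_add_eq_0)
    hence "r1 \<in> \<rat>" using rat by auto
    thus False using irr by simp
  qed
  have A0: "A = 0" using g1 B0 by simp
  have C0: "C = 0" using g2 A0 pos by simp
  have D0: "Dd = 0" using g3 A0 pos by simp
  show ?thesis using A0 B0 C0 D0 by simp
qed

lemma rb_facts:
  assumes "real_biquadratic D1 D2"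
  shows "D1 > 1" "D2 > 1" "sqrt (real_of_int D1) \<notin> \<rat>" "sqrt (real_of_int D2) \<notin> \<rat>"
    "sqrt (real_of_int D1) * sqrt (real_of_int D2) \<notin> \<rat>"
proof -
  show D1: "D1 > 1" and D2: "D2 > 1" using assms by (auto simp: real_biquadratic_def)
  show "sqrt (real_of_int D1) \<notin> \<rat>" "sqrt (real_of_int D2) \<notin> \<rat>"
    using assms sqf_not_square by (auto simp: real_biquadratic_def)
  show "sqrt (real_of_int D1) * sqrt (real_of_int D2) \<notin> \<rat>"
  proof
    assume "sqrt (real_of_int D1) * sqrt (real_of_int D2) \<in> \<rat>"
    hence sq: "sqrt (real_of_int (D1 * D2)) \<in> \<rat>" by (simp add: real_sqrt_mult)
    have nn: "D1 * D2 \<ge> 0" using D1 D2 by simp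
    from sqrt_rat_square[OF nn sq] obtain k where "D1 * D2 = k ^ 2" ..
    note kk = this
    have sf: "squarefree D1" "squarefree D2" using assms by (auto simp: real_biquadratic_def)
    have "D1 = D2" by (rule prod_square_eq[OF sf]) (use D1 D2 kk in auto)
    thus False using assms by (simp add: real_biquadratic_def)
  qed
qed

lemma val_E:
  assumes "real_biquadratic D1 D2"
  shows "bq_val D1 D2 x = E (sqrt (of_int D1)) (sqrt (of_int D2)) x"
  using emb_E[of D1 D2 "(False,False)" x] assms by (simp add: real_biquadratic_def sg_def)

lemma E_zero:
  assumes "real_biquadratic D1 D2" "E (sqrt (of_int D1)) (sqrt (of_int D2)) x = 0"
  shows "x = (0,0,0,0)"
proof -
  obtain a b c d where x: "x = (a,b,c,d)" by (cases x) auto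
  note f = rb_facts[OF assms(1)]
  have "of_rat a = (0::real) \<and> of_rat b = (0::real) \<and> of_rat c = (0::real) \<and> of_rat d = (0::real)"
    apply (rule indep_real[of "sqrt (of_int D1)" "of_int D1" "sqrt (of_int D2)" "of_int D2"])
    using f assms(2) by (auto simp: x E_def)
  thus ?thesis using x by simp
qed

lemma val_inj:
  assumes "real_biquadratic D1 D2" "bq_val D1 D2 x = bq_val D1 D2 y"
  shows "x = y"
proof -
  have "E (sqrt (of_int D1)) (sqrt (of_int D2)) (qsub x y) = 0"
    using assms by (simp add: E_sub val_E)
  hence "qsub x y = (0,0,0,0)" using E_zero assms(1) by blast
  thus ?thesis by (cases x; cases y) (simp add: qsub_def)
qed

section \<open>Transfer to conjugate embeddings\<close>

fun qh :: "int \<Rightarrow> int \<Rightarrow> int list \<Rightarrow> q4 \<Rightarrow> q4" where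
  "qh D1 D2 [] x = (0,0,0,0)"
| "qh D1 D2 (c # cs) x = qadd (qconst (of_int c)) (qmul D1 D2 x (qh D1 D2 cs x))"

lemma E_qh:
  assumes "t1 * t1 = of_int D1" "t2 * t2 = of_int D2"
  shows "E t1 t2 (qh D1 D2 (coeffs p) x) = poly (map_poly real_of_int p) (E t1 t2 x)"
proof (induction p rule: pCons_induct)
  case 0
  show ?case by (simp add: E_def)
next
  case (pCons a p)
  have "coeffs (pCons a p) = a # coeffs p" using pCons.hyps by (auto simp: cCons_def)
  moreover have "map_poly real_of_int (pCons a p) = pCons (of_int a) (map_poly real_of_int p)"
    by (rule map_poly_pCons) (use pCons.hyps in auto)
  ultimately show ?case using pCons.IH by (simp add: E_add E_mul[OF assms])
qed

lemma emb_sq: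
  assumes "D \<ge> 0" shows "(sg e * sqrt (real_of_int D)) * (sg e * sqrt (real_of_int D)) = of_int D"
proof -
  have "(sg e * sqrt (real_of_int D)) * (sg e * sqrt (real_of_int D)) = (sg e * sg e) * (sqrt (of_int D) * sqrt (of_int D))"
    by (simp add: mult_ac)
  thus ?thesis using assms by simp
qed

lemma emb_E':
  assumes "real_biquadratic D1 D2"
  shows "bq_emb D1 D2 \<sigma> x = E (sg (fst \<sigma>) * sqrt (of_int D1)) (sg (snd \<sigma>) * sqrt (of_int D2)) x"
  using emb_E assms by (simp add: real_biquadratic_def)

lemma sq_facts:
  assumes "real_biquadratic D1 D2"
  shows "(sg e * sqrt (real_of_int D1)) * (sg e * sqrt (real_of_int D1)) = of_int D1"
        "(sg e * sqrt (real_of_int D2)) * (sg e * sqrt (real_of_int D2)) = of_int D2"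
  using assms emb_sq by (auto simp: real_biquadratic_def)

lemma emb_mul:
  assumes "real_biquadratic D1 D2"
  shows "bq_emb D1 D2 \<sigma> (qmul D1 D2 x y) = bq_emb D1 D2 \<sigma> x * bq_emb D1 D2 \<sigma> y"
  unfolding emb_E'[OF assms] by (rule E_mul[OF sq_facts[OF assms]])

lemma emb_const [simp]:
  assumes "real_biquadratic D1 D2"
  shows "bq_emb D1 D2 \<sigma> (qconst c) = of_rat c"
  unfolding emb_E'[OF assms] by simp

lemma emb_qh:
  assumes "real_biquadratic D1 D2"
  shows "bq_emb D1 D2 \<sigma> (qh D1 D2 (coeffs p) x) = poly (map_poly real_of_int p) (bq_emb D1 D2 \<sigma> x)"
  unfolding emb_E'[OF assms] by (rule E_qh[OF sq_facts[OF assms]])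

lemma transfer_eq:
  assumes "real_biquadratic D1 D2" "bq_val D1 D2 x = bq_val D1 D2 y"
  shows "bq_emb D1 D2 \<sigma> x = bq_emb D1 D2 \<sigma> y"
  using val_inj[OF assms] by simp

lemma transfer_alg:
  assumes rb: "real_biquadratic D1 D2" and a: "algebraic_int (bq_val D1 D2 x)"
  shows "algebraic_int (bq_emb D1 D2 \<sigma> x)"
proof -
  obtain p where p: "poly (map_poly real_of_int p) (bq_val D1 D2 x) = 0" "lead_coeff p = 1"
    using a unfolding algebraic_int_altdef_ipoly by blast
  have "bq_val D1 D2 (qh D1 D2 (coeffs p) x) = bq_val D1 D2 (qconst 0)"
    using p(1) emb_qh[OF rb] emb_const[OF rb] by simp
  hence "bq_emb D1 D2 \<sigma> (qh D1 D2 (coeffs p) x) = bq_emb D1 D2 \<sigma> (qconst 0)"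
    by (rule transfer_eq[OF rb])
  hence "poly (map_poly real_of_int p) (bq_emb D1 D2 \<sigma> x) = 0"
    using emb_qh[OF rb] emb_const[OF rb] by simp
  thus ?thesis unfolding algebraic_int_altdef_ipoly using p(2) by blast
qed

lemma transfer_mul_const:
  assumes rb: "real_biquadratic D1 D2" and e: "bq_val D1 D2 x * bq_val D1 D2 y = of_rat c"
  shows "bq_emb D1 D2 \<sigma> x * bq_emb D1 D2 \<sigma> y = of_rat c"
proof -
  have "bq_val D1 D2 (qmul D1 D2 x y) = bq_val D1 D2 (qconst c)"
    using e emb_mul[OF rb] emb_const[OF rb] by simp
  hence "bq_emb D1 D2 \<sigma> (qmul D1 D2 x y) = bq_emb D1 D2 \<sigma> (qconst c)"
    by (rule transfer_eq[OF rb])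
  thus ?thesis using emb_mul[OF rb] emb_const[OF rb] by simp
qed

definition rs :: "bool \<Rightarrow> rat" where "rs e = (if e then -1 else 1)"

definition qconj :: "bool \<times> bool \<Rightarrow> q4 \<Rightarrow> q4" where
  "qconj \<tau> x = (case x of (a,b,c,d) \<Rightarrow> (a, rs (fst \<tau>) * b, rs (snd \<tau>) * c, rs (fst \<tau>) * rs (snd \<tau>) * d))"

definition xo :: "bool \<times> bool \<Rightarrow> bool \<times> bool \<Rightarrow> bool \<times> bool" where
  "xo \<sigma> \<tau> = (fst \<sigma> \<noteq> fst \<tau>, snd \<sigma> \<noteq> snd \<tau>)"

lemma emb_conj: "bq_emb D1 D2 \<sigma> (qconj \<tau> x) = bq_emb D1 D2 (xo \<sigma> \<tau>) x"
  by (cases x; cases \<sigma>; cases \<tau>) (auto simp: bq_emb_def qconj_def xo_def rs_def Let_def of_rat_mult of_rat_minus)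

lemma unit_emb_nz:
  assumes rb: "real_biquadratic D1 D2" and u: "bq_unit D1 D2 x"
  shows "bq_emb D1 D2 \<sigma> x \<noteq> 0"
proof -
  obtain y where "bq_val D1 D2 x * bq_val D1 D2 y = of_rat 1" using u by (auto simp: bq_unit_def)
  hence "bq_emb D1 D2 \<sigma> x * bq_emb D1 D2 \<sigma> y = of_rat 1" by (rule transfer_mul_const[OF rb])
  thus ?thesis by auto
qed

lemma unit_conj:
  assumes rb: "real_biquadratic D1 D2" and u: "bq_unit D1 D2 x"
  shows "bq_unit D1 D2 (qconj \<tau> x)"
proof -
  obtain y where y: "algebraic_int (bq_val D1 D2 y)" "bq_val D1 D2 x * bq_val D1 D2 y = of_rat 1"
    using u by (auto simp: bq_unit_def)
  have xo0: "xo (False, False) \<tau> = \<tau>" by (simp add: xo_def)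
  have ax: "algebraic_int (bq_val D1 D2 x)" using u unfolding bq_unit_def by blast
  have "algebraic_int (bq_val D1 D2 (qconj \<tau> x))"
    unfolding emb_conj xo0 by (rule transfer_alg[OF rb ax])
  moreover have "algebraic_int (bq_val D1 D2 (qconj \<tau> y))"
    unfolding emb_conj xo0 by (rule transfer_alg[OF rb y(1)])
  moreover have "bq_val D1 D2 (qconj \<tau> x) * bq_val D1 D2 (qconj \<tau> y) = 1"
    unfolding emb_conj xo0 using transfer_mul_const[OF rb y(2)] by simp
  ultimately show ?thesis unfolding bq_unit_def by blast
qed

lemma unit_mul:
  assumes rb: "real_biquadratic D1 D2" and u: "bq_unit D1 D2 x" "bq_unit D1 D2 y"
  shows "bq_unit D1 D2 (qmul D1 D2 x y)"
proof -
  obtain x' where x': "algebraic_int (bq_val D1 D2 x')" "bq_val D1 D2 x * bq_val D1 D2 x' = 1"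
    using u by (auto simp: bq_unit_def)
  obtain y' where y': "algebraic_int (bq_val D1 D2 y')" "bq_val D1 D2 y * bq_val D1 D2 y' = 1"
    using u by (auto simp: bq_unit_def)
  have ax: "algebraic_int (bq_val D1 D2 x)" "algebraic_int (bq_val D1 D2 y)"
    using u unfolding bq_unit_def by blast+
  have "algebraic_int (bq_val D1 D2 (qmul D1 D2 x y))"
    unfolding emb_mul[OF rb] by (rule algebraic_int_mult_real[OF ax])
  moreover have "algebraic_int (bq_val D1 D2 (qmul D1 D2 x' y'))"
    unfolding emb_mul[OF rb] by (rule algebraic_int_mult_real[OF x'(1) y'(1)])
  moreover have "bq_val D1 D2 (qmul D1 D2 x y) * bq_val D1 D2 (qmul D1 D2 x' y') = 1"
    unfolding emb_mul[OF rb]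
    using x'(2) y'(2) by (metis mult.assoc mult.left_commute mult_1_right)
  ultimately show ?thesis unfolding bq_unit_def by blast
qed

lemma unit_m1:
  assumes rb: "real_biquadratic D1 D2"
  shows "bq_unit D1 D2 (qconst (-1))"
proof -
  have "bq_val D1 D2 (qconst (-1)) = -1" using emb_const[OF rb] by simp
  thus ?thesis unfolding bq_unit_def by (intro conjI exI[of _ "qconst (-1)"]) auto
qed

lemma unit_1:
  assumes rb: "real_biquadratic D1 D2"
  shows "bq_unit D1 D2 (qconst 1)"
proof -
  have "bq_val D1 D2 (qconst 1) = 1" using emb_const[OF rb] by simp
  thus ?thesis unfolding bq_unit_def by (intro conjI exI[of _ "qconst 1"]) auto
qed



section \<open>Signatures\<close>

definition perm :: "bool \<times> bool \<Rightarrow> bit ^ (bool \<times> bool) \<Rightarrow> bit ^ (bool \<times> bool)" where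
  "perm \<tau> v = (\<chi> \<sigma>. v $ xo \<sigma> \<tau>)"

definition ones :: "bit ^ (bool \<times> bool)" where "ones = (\<chi> \<sigma>. 1)"

definition TT :: "bit ^ (bool \<times> bool) \<Rightarrow> bit" where
  "TT x = x $ (False,False) + x $ (False,True) + x $ (True,False) + x $ (True,True)"

definition bb :: "bool \<times> bool \<Rightarrow> bit ^ (bool \<times> bool)" where
  "bb \<sigma> = (\<chi> \<rho>. if \<rho> = (False,False) \<or> \<rho> = \<sigma> then 1 else 0)"

lemma all4: "(\<forall>\<sigma>::bool \<times> bool. P \<sigma>) \<longleftrightarrow> P (False,False) \<and> P (False,True) \<and> P (True,False) \<and> P (True,True)"
proof
  assume h: "P (False,False) \<and> P (False,True) \<and> P (True,False) \<and> P (True,True)"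
  show "\<forall>\<sigma>. P \<sigma>"
  proof
    fix \<sigma> :: "bool \<times> bool"
    obtain a b where s: "\<sigma> = (a,b)" by (cases \<sigma>) auto
    show "P \<sigma>" using h unfolding s by (cases a; cases b) auto
  qed
qed auto

lemma ex4: "(\<exists>\<sigma>::bool \<times> bool. P \<sigma>) \<longleftrightarrow> P (False,False) \<or> P (False,True) \<or> P (True,False) \<or> P (True,True)"
  using all4[of "\<lambda>\<sigma>. \<not> P \<sigma>"] by blast

lemma vec_eq4: "(x :: 'a ^ (bool \<times> bool)) = y \<longleftrightarrow>
   x $ (False,False) = y $ (False,False) \<and> x $ (False,True) = y $ (False,True) \<and>
   x $ (True,False) = y $ (True,False) \<and> x $ (True,True) = y $ (True,True)"
  unfolding Finite_Cartesian_Product.vec_eq_iff by (rule all4)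

lemma bitlemma1:
  assumes "TT x = 1" "TT v = 0" "v \<noteq> 0" "v \<noteq> ones"
  shows "\<exists>\<tau>. x + perm \<tau> x = v \<or> x + perm \<tau> x = v + ones"
  using assms unfolding ex4 vec_eq4 perm_def xo_def ones_def TT_def
  apply (cases "x $ (False,False)"; cases "x $ (False,True)"; cases "x $ (True,False)"; cases "x $ (True,True)";
         cases "v $ (False,False)"; cases "v $ (False,True)"; cases "v $ (True,False)"; cases "v $ (True,True)")
  by simp_all

lemma bitlemma2:
  assumes "TT x = 0"
  shows "x = x $ (False,True) *s bb (False,True) + x $ (True,False) *s bb (True,False) + x $ (True,True) *s bb (True,True)"
  using assms unfolding vec_eq4 bb_def TT_def
  apply (cases "x $ (False,False)"; cases "x $ (False,True)"; cases "x $ (True,False)"; cases "x $ (True,True)")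
  by simp_all

lemma ones_ones: "(y :: bit ^ (bool \<times> bool)) + ones + ones = y"
  unfolding vec_eq4 ones_def by (simp add: add.assoc)

lemma pattern4:
  fixes e :: "bool \<times> bool \<Rightarrow> real"
  assumes r: "r > 0" "r \<notin> \<rat>" and e: "\<And>\<sigma>. e \<sigma> = r \<or> e \<sigma> = - r"
    and sumq: "e (False,False) + e (False,True) + e (True,False) + e (True,True) \<in> \<rat>"
  defines "v \<equiv> (\<chi> \<sigma>. if e \<sigma> < 0 then 1 else 0) :: bit ^ (bool \<times> bool)"
  shows "TT v = 0 \<and> v \<noteq> 0 \<and> v \<noteq> ones"
proof -
  define n :: "bool \<times> bool \<Rightarrow> real" where "n \<sigma> = (if e \<sigma> < 0 then 1 else 0)" for \<sigma>
  have en: "e \<sigma> = (1 - 2 * n \<sigma>) * r" for \<sigma> using e[of \<sigma>] r by (auto simp: n_def)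
  have nq: "n \<sigma> \<in> \<rat>" for \<sigma> by (simp add: n_def)
  define N where "N = n (False,False) + n (False,True) + n (True,False) + n (True,True)"
  have "e (False,False) + e (False,True) + e (True,False) + e (True,True) = (4 - 2 * N) * r"
    unfolding en N_def by (simp add: algebra_simps)
  hence sq: "(4 - 2 * N) * r \<in> \<rat>" using sumq by simp
  have N2: "N = 2"
  proof (rule ccontr)
    assume "N \<noteq> 2"
    hence nz: "4 - 2 * N \<noteq> 0" by simp
    have "N \<in> \<rat>" unfolding N_def using nq by simp
    hence q4: "(4 - 2 * N) \<in> \<rat>" by simp
    have r_eq: "r = ((4 - 2 * N) * r) / (4 - 2 * N)" using nz by simp
    have "((4 - 2 * N) * r) / (4 - 2 * N) \<in> \<rat>" by (rule Rats_divide[OF sq q4])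
    hence "r \<in> \<rat>" by (simp only: r_eq[symmetric])
    thus False using r by simp
  qed
  show ?thesis using N2 unfolding N_def n_def v_def vec_eq4 TT_def ones_def
    by (cases "e (False,False) < 0"; cases "e (False,True) < 0"; cases "e (True,False) < 0"; cases "e (True,True) < 0")
       simp_all
qed

lemma sgn_mul:
  assumes rb: "real_biquadratic D1 D2" and u: "bq_unit D1 D2 x" "bq_unit D1 D2 y"
  shows "bq_sgn D1 D2 (qmul D1 D2 x y) = bq_sgn D1 D2 x + bq_sgn D1 D2 y"
proof (rule Finite_Cartesian_Product.vec_eq_iff[THEN iffD2], intro allI)
  fix \<sigma>
  have a: "bq_emb D1 D2 \<sigma> x \<noteq> 0" and b: "bq_emb D1 D2 \<sigma> y \<noteq> 0"
    using unit_emb_nz[OF rb] u by auto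
  show "bq_sgn D1 D2 (qmul D1 D2 x y) $ \<sigma> = (bq_sgn D1 D2 x + bq_sgn D1 D2 y) $ \<sigma>"
    using a b by (auto simp: bq_sgn_def emb_mul[OF rb] mult_less_0_iff)
qed

lemma sgn_conj: "bq_sgn D1 D2 (qconj \<tau> x) = perm \<tau> (bq_sgn D1 D2 x)"
  by (simp add: bq_sgn_def perm_def emb_conj)

lemma sgn_const:
  assumes rb: "real_biquadratic D1 D2"
  shows "bq_sgn D1 D2 (qconst (-1)) = ones" "bq_sgn D1 D2 (qconst 1) = 0"
  using rb by (auto simp: bq_sgn_def ones_def Finite_Cartesian_Product.vec_eq_iff)

theorem lemma3p3:
  fixes D1 D2 D :: int and s :: "rat \<times> rat \<times> rat \<times> rat"
  assumes "real_biquadratic D1 D2"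
    and "sgnrk D1 D2 \<ge> 3"
    and "D > 1" and "squarefree D"
    and "(bq_val D1 D2 s)\<^sup>2 = of_int D"
  shows "\<exists>\<eta>. bq_unit D1 D2 \<eta> \<and> bq_sgn D1 D2 \<eta> = bq_sgn D1 D2 s"
proof (rule ccontr)
  note rb = assms(1)
  assume nex: "\<not> (\<exists>\<eta>. bq_unit D1 D2 \<eta> \<and> bq_sgn D1 D2 \<eta> = bq_sgn D1 D2 s)"
  define S where "S = bq_sgn D1 D2 ` {x. bq_unit D1 D2 x}"
  define v where "v = bq_sgn D1 D2 s"
  have vS: "v \<notin> S"
  proof
    assume "v \<in> S"
    then obtain \<eta> where e1: "\<eta> \<in> {x. bq_unit D1 D2 x}" and e2: "v = bq_sgn D1 D2 \<eta>"
      unfolding S_def by (rule imageE)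
    have "bq_unit D1 D2 \<eta> \<and> bq_sgn D1 D2 \<eta> = bq_sgn D1 D2 s" using e1 e2 by (simp add: v_def)
    thus False using nex by blast
  qed
  have addS: "x + y \<in> S" if xs: "x \<in> S" and ys: "y \<in> S" for x y
  proof -
    obtain a where a: "bq_unit D1 D2 a" "x = bq_sgn D1 D2 a" using xs unfolding S_def image_iff by blast
    obtain b where b: "bq_unit D1 D2 b" "y = bq_sgn D1 D2 b" using ys unfolding S_def image_iff by blast
    have "x + y = bq_sgn D1 D2 (qmul D1 D2 a b)" using sgn_mul[OF rb a(1) b(1)] a b by simp
    moreover have "bq_unit D1 D2 (qmul D1 D2 a b)" using unit_mul[OF rb a(1) b(1)] .
    ultimately show ?thesis unfolding S_def by blast
  qed
  have permS: "perm \<tau> x \<in> S" if xs: "x \<in> S" for x \<tau>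
  proof -
    obtain a where a: "bq_unit D1 D2 a" "x = bq_sgn D1 D2 a" using xs unfolding S_def image_iff by blast
    have "perm \<tau> x = bq_sgn D1 D2 (qconj \<tau> a)" using a by (simp add: sgn_conj)
    moreover have "bq_unit D1 D2 (qconj \<tau> a)" using unit_conj[OF rb a(1)] .
    ultimately show ?thesis unfolding S_def by blast
  qed
  have onesS: "ones \<in> S"
    using unit_m1[OF rb] sgn_const(1)[OF rb] unfolding S_def by (metis image_eqI mem_Collect_eq)
  have zeroS: "0 \<in> S"
    using unit_1[OF rb] sgn_const(2)[OF rb] unfolding S_def by (metis image_eqI mem_Collect_eq)
  have sub: "vec.subspace S"
    unfolding vec.subspace_def
  proof (intro conjI ballI allI)
    show "0 \<in> S" by (rule zeroS)
  next
    fix x y assume "x \<in> S" "y \<in> S" thus "x + y \<in> S" by (rule addS)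
  next
    fix c :: bit and x assume "x \<in> S"
    thus "c *s x \<in> S" using zeroS by (cases c) auto
  qed
  have spanS: "vec.span S = S" using sub by simp
  have vpat: "TT v = 0 \<and> v \<noteq> 0 \<and> v \<noteq> ones"
  proof -
    define r where "r = sqrt (real_of_int D)"
    have r0: "r > 0" using assms(3) by (simp add: r_def)
    have rq: "r \<notin> \<rat>" unfolding r_def by (rule sqf_not_square[OF assms(4,3)])
    have sqv: "bq_val D1 D2 s * bq_val D1 D2 s = of_rat (of_int D)"
      using assms(5) by (simp add: power2_eq_square)
    have e: "bq_emb D1 D2 \<sigma> s = r \<or> bq_emb D1 D2 \<sigma> s = - r" for \<sigma>
    proof -
      have "bq_emb D1 D2 \<sigma> s * bq_emb D1 D2 \<sigma> s = of_int D"
        using transfer_mul_const[OF rb sqv] by simp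
      also have "\<dots> = r * r" using assms(3) by (simp add: r_def)
      finally have "(bq_emb D1 D2 \<sigma> s - r) * (bq_emb D1 D2 \<sigma> s + r) = 0" by (simp add: algebra_simps)
      hence "bq_emb D1 D2 \<sigma> s - r = 0 \<or> bq_emb D1 D2 \<sigma> s + r = 0" by simp
      thus ?thesis by (auto simp: eq_neg_iff_add_eq_0)
    qed
    have sumq: "bq_emb D1 D2 (False,False) s + bq_emb D1 D2 (False,True) s + bq_emb D1 D2 (True,False) s + bq_emb D1 D2 (True,True) s \<in> \<rat>"
    proof -
      obtain a b c d where s: "s = (a,b,c,d)" by (cases s) auto
      have "bq_emb D1 D2 (False,False) s + bq_emb D1 D2 (False,True) s + bq_emb D1 D2 (True,False) s + bq_emb D1 D2 (True,True) s = 4 * of_rat a"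
        unfolding emb_E'[OF rb] s by (simp add: E_def sg_def algebra_simps)
      thus ?thesis by simp
    qed
    show ?thesis using pattern4[OF r0 rq e sumq] unfolding v_def bq_sgn_def .
  qed
  have Teven: "TT x = 0" if "x \<in> S" for x
  proof (rule ccontr)
    assume "TT x \<noteq> 0"
    hence "TT x = 1" by simp
    then obtain \<tau> where t: "x + perm \<tau> x = v \<or> x + perm \<tau> x = v + ones"
      using bitlemma1 vpat by blast
    have xs: "x + perm \<tau> x \<in> S" using addS[OF that permS[OF that]] .
    show False
    proof (cases "x + perm \<tau> x = v")
      case True thus False using xs vS by simp
    next
      case False
      hence "v + ones \<in> S" using t xs by simp
      hence "v + ones + ones \<in> S" using addS onesS by blast
      thus False using vS ones_ones by simp
    qed
  qed
  define B where "B = set [bb (False,True), bb (True,False), bb (True,True)]"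
  have inB: "x \<in> vec.span B" if "TT x = 0" for x
  proof -
    have "x $ (False,True) *s bb (False,True) + x $ (True,False) *s bb (True,False) + x $ (True,True) *s bb (True,True) \<in> vec.span B"
      by (intro vec.span_add vec.span_scale vec.span_base) (auto simp: B_def)
    thus ?thesis using bitlemma2[OF that] by simp
  qed
  have SB: "S \<subseteq> vec.span B" using inB Teven by blast
  have vB: "v \<in> vec.span B" using inB vpat by simp
  have "vec.span S \<subset> vec.span B" unfolding spanS using SB vB vS by blast
  hence "vec.dim S < vec.dim B" by (rule vec.dim_psubset)
  moreover have "vec.dim B \<le> card B"
    by (rule vec.dim_le_card) (auto simp: B_def intro: vec.span_base)
  moreover have "card B \<le> 3" unfolding B_def using card_length[of "[bb (False,True), bb (True,False), bb (True,True)]"] by simp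
  moreover have "sgnrk D1 D2 = vec.dim S" by (simp add: sgnrk_def S_def)
  ultimately show False using assms(2) by linarith
qed


end
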